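(* Let $n\ge 1$ and let $a=(a_1,\dots,a_n)$ be an inversion sequence. Then $a$ avoids each of the patterns $100$, $102$ and $201$ if and only if $a$ can be written as a concatenation $a=p_1\circ q_2\circ q_3$ where: (i) $p_1$ is a (possibly empty) non-decreasing sequence with $\max(p_1)<\max(a)$ (if $p_1$ is nonempty); (ii) $q_2$ is a nonempty sequence whose entries all lie in $\{\max(a),\operatorname{premax}(a)\}$, whose first entry is $\max(a)$, and in which the value $\operatorname{premax}(a)$ occurs at most once; (iii) $q_3$ is a (possibly empty) strictly decreasing sequence all of whose entries are $<\operatorname{premax}(a)$. (When $a$ has only one distinct value, $\operatorname{premax}(a)$ is undefined; then $p_1$ and $q_3$ are empty and $q_2=a$ consists only of copies of $\max(a)$.)
   Context: An inversion sequence of length $n$ is an integer sequence $(a_1,\dots,a_n)$ with $0\le a_i<i$ for all $i$. A pattern is a sequence $\sigma$ of non-negative integers containing every value from $0$ to $\max(\sigma)$; the reduction of a sequence replaces its smallest values by $0$, the next smallest by $1$, etc. A sequence $a$ contains $\sigma$ if some (not necessarily consecutive) subsequence of $a$ has reduction $\sigma$; otherwise $a$ avoids $\sigma$. For a sequence $a$, $\max(a)$ is its largest value and $\operatorname{premax}(a)$ is the largest value of $a$ strictly less than $\max(a)$. $\circ$ denotes concatenation. *)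

theory Defs
  imports Main
begin

text \<open>Inversion sequences are lists of naturals, 0-indexed: position i (0-based)
  corresponds to a_(i+1), so the condition 0 <= a_(i+1) < i+1 becomes a!i <= i.\<close>
definition inversion_seq :: "nat list \<Rightarrow> bool" where
  "inversion_seq a \<longleftrightarrow> (\<forall>i<length a. a ! i < Suc i)"

definition reduction :: "nat list \<Rightarrow> nat list" where
  "reduction s = map (\<lambda>x. card {v \<in> set s. v < x}) s"

definition contains :: "nat list \<Rightarrow> nat list \<Rightarrow> bool" where
  "contains a \<sigma> \<longleftrightarrow> (\<exists>I. reduction (nths a I) = \<sigma>)"

definition avoids :: "nat list \<Rightarrow> nat list \<Rightarrow> bool" where
  "avoids a \<sigma> \<longleftrightarrow> \<not> contains a \<sigma>"

definition seqmax :: "nat list \<Rightarrow> nat" where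
  "seqmax a = Max (set a)"

definition premax :: "nat list \<Rightarrow> nat option" where
  "premax a = (if set a - {seqmax a} = {} then None else Some (Max (set a - {seqmax a})))"

definition below_premax :: "nat list \<Rightarrow> nat \<Rightarrow> bool" where
  "below_premax a x = (case premax a of None \<Rightarrow> False | Some p \<Rightarrow> x < p)"

definition in_top_two :: "nat list \<Rightarrow> nat \<Rightarrow> bool" where
  "in_top_two a x \<longleftrightarrow> x = seqmax a \<or> premax a = Some x"

end

theory Submission
  imports Defs
begin

lemma red3: "reduction [x,y,z] = map (\<lambda>w. length (remdups (filter (\<lambda>v. v<w) [x,y,z]))) [x,y,z]"
proof -
  have "\<And>w. {v \<in> set [x,y,z]. v < w} = set (filter (\<lambda>v. v<w) [x,y,z])" by auto
  then show ?thesis unfolding reduction_def by (simp only: length_remdups_card_conv)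
qed
lemma red3_100: "reduction [x,y,z] = [1,0,0] \<longleftrightarrow> (y<x \<and> z=y)"
  unfolding red3
  by (cases x y rule: linorder_cases; cases y z rule: linorder_cases; cases x z rule: linorder_cases)
     simp_all
lemma red3_102: "reduction [x,y,z] = [1,0,2] \<longleftrightarrow> (y<x \<and> x<z)"
  unfolding red3
  by (cases x y rule: linorder_cases; cases y z rule: linorder_cases; cases x z rule: linorder_cases)
     simp_all
lemma red3_201: "reduction [x,y,z] = [2,0,1] \<longleftrightarrow> (y<z \<and> z<x)"
  unfolding red3
  by (cases x y rule: linorder_cases; cases y z rule: linorder_cases; cases x z rule: linorder_cases)
     simp_all


lemma nthsA: "nths xs I = y # ys \<Longrightarrow> \<exists>i<length xs. xs!i = y \<and> ys = nths (drop (Suc i) xs) {j. Suc i + j \<in> I}"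
proof (induction xs arbitrary: I)
  case Nil then show ?case by simp
next
  case (Cons x xs)
  show ?case
  proof (cases "0 \<in> I")
    case True
    then show ?thesis using Cons.prems by (auto simp: nths_Cons)
  next
    case False
    then have "nths xs {j. Suc j \<in> I} = y # ys" using Cons.prems by (simp add: nths_Cons)
    from Cons.IH[OF this] obtain i where "i<length xs" "xs!i = y"
      "ys = nths (drop (Suc i) xs) {j. Suc i + j \<in> {j. Suc j \<in> I}}" by blast
    then show ?thesis by (intro exI[of _ "Suc i"]) auto
  qed
qed

lemma nthsB: "i < length xs \<Longrightarrow> \<forall>t\<in>I. i < t \<Longrightarrow> J = {t. Suc i + t \<in> I} \<Longrightarrow>
   nths xs (insert i I) = xs!i # nths (drop (Suc i) xs) J"
proof (induction xs arbitrary: i I J)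
  case Nil then show ?case by simp
next
  case (Cons x xs)
  show ?case
  proof (cases i)
    case 0
    have "{j. Suc j \<in> insert i I} = J" using 0 Cons.prems by auto
    then show ?thesis using 0 by (simp add: nths_Cons)
  next
    case (Suc i')
    have 1: "0 \<notin> insert i I" using Suc Cons.prems by auto
    have 2: "{j. Suc j \<in> insert i I} = insert i' {j. Suc j \<in> I}" using Suc by auto
    have "nths xs (insert i' {j. Suc j \<in> I}) = xs!i' # nths (drop (Suc i') xs) J"
      using Cons.prems Suc by (intro Cons.IH) auto
    then show ?thesis using 1 2 Suc by (simp add: nths_Cons)
  qed
qed

lemma contains3: "length \<sigma> = 3 \<Longrightarrow> contains a \<sigma> \<longleftrightarrow>
  (\<exists>i j k. i<j \<and> j<k \<and> k<length a \<and> reduction [a!i,a!j,a!k] = \<sigma>)"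
proof
  assume l: "length \<sigma> = 3" and "contains a \<sigma>"
  then obtain I where I: "reduction (nths a I) = \<sigma>" unfolding contains_def by blast
  have "length (reduction (nths a I)) = length (nths a I)" by (simp add: reduction_def)
  then have "length (nths a I) = 3" using l I by simp
  then obtain x y z where xyz: "nths a I = [x,y,z]"
    by (cases "nths a I" rule: list.exhaust; simp; rename_tac u us; case_tac us; simp; rename_tac v vs; case_tac vs; simp)
  from nthsA[OF xyz] obtain i where i: "i<length a" "a!i = x" "[y,z] = nths (drop (Suc i) a) {j. Suc i + j \<in> I}" by blast
  from nthsA[OF i(3)[symmetric]] obtain j' where j': "j' < length (drop (Suc i) a)" "drop (Suc i) a ! j' = y"
    "[z] = nths (drop (Suc j') (drop (Suc i) a)) {j. Suc j' + j \<in> {j. Suc i + j \<in> I}}" by blast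
  from nthsA[OF j'(3)[symmetric]] obtain k' where k': "k' < length (drop (Suc j') (drop (Suc i) a))"
     "drop (Suc j') (drop (Suc i) a) ! k' = z" by blast
  show "\<exists>i j k. i<j \<and> j<k \<and> k<length a \<and> reduction [a!i,a!j,a!k] = \<sigma>"
  proof (intro exI conjI)
    have s: "\<sigma> = reduction [x,y,z]" using I xyz by simp
    have "a ! (Suc i + j') = y" using j' i by simp
    moreover have "a ! (Suc (Suc i + j') + k') = z" using j' k' i by (simp add: add_ac)
    ultimately show "reduction [a ! i, a ! (Suc i + j'), a ! (Suc (Suc i + j') + k')] = \<sigma>"
      using s i by simp
    show "i < Suc i + j'" by simp
    show "Suc i + j' < Suc (Suc i + j') + k'" by simp
    show "Suc (Suc i + j') + k' < length a" using k' by simp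
  qed
next
  assume "\<exists>i j k. i<j \<and> j<k \<and> k<length a \<and> reduction [a!i,a!j,a!k] = \<sigma>"
  then obtain i j k where ijk: "i<j" "j<k" "k<length a" "reduction [a!i,a!j,a!k] = \<sigma>" by blast
  define xs1 where "xs1 = drop (Suc i) a"
  define xs2 where "xs2 = drop (Suc (j - Suc i)) xs1"
  have e1: "nths a (insert i {j,k}) = a!i # nths xs1 {j - Suc i, k - Suc i}"
    unfolding xs1_def using ijk by (intro nthsB) auto
  have e2: "nths xs1 (insert (j - Suc i) {k - Suc i}) = xs1!(j - Suc i) # nths xs2 {k - Suc j}"
    unfolding xs2_def using ijk by (intro nthsB) (auto simp: xs1_def)
  have e3: "nths xs2 (insert (k - Suc j) {}) = xs2!(k - Suc j) # nths (drop (Suc (k - Suc j)) xs2) {}"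
    using ijk by (intro nthsB) (auto simp: xs2_def xs1_def)
  have "nths a {i,j,k} = [a!i,a!j,a!k]"
    using e1 e2 e3 ijk by (simp add: xs1_def xs2_def)
  then show "contains a \<sigma>" unfolding contains_def using ijk by metis
qed

definition bad3 :: "nat list \<Rightarrow> bool" where
  "bad3 a \<longleftrightarrow> (\<exists>i j k. i<j \<and> j<k \<and> k<length a \<and> a!j<a!i \<and> a!j\<le>a!k \<and> a!k\<noteq>a!i)"

lemma avoid_iff: "(avoids a [1,0,0] \<and> avoids a [1,0,2] \<and> avoids a [2,0,1]) \<longleftrightarrow> \<not> bad3 a"
proof -
  have l1: "length [1::nat,0,0] = 3" and l2: "length [1::nat,0,2] = 3" and l3: "length [2::nat,0,1] = 3" by simp_all
  show ?thesis
    unfolding avoids_def bad3_def contains3[OF l1] contains3[OF l2] contains3[OF l3]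
      red3_100 red3_102 red3_201
  proof (intro iffI)
    assume L: "(\<nexists>i j k. i < j \<and> j < k \<and> k < length a \<and> a ! j < a ! i \<and> a ! k = a ! j) \<and>
      (\<nexists>i j k. i < j \<and> j < k \<and> k < length a \<and> a ! j < a ! i \<and> a ! i < a ! k) \<and>
      (\<nexists>i j k. i < j \<and> j < k \<and> k < length a \<and> a ! j < a ! k \<and> a ! k < a ! i)"
    show "\<nexists>i j k. i < j \<and> j < k \<and> k < length a \<and> a ! j < a ! i \<and> a ! j \<le> a ! k \<and> a ! k \<noteq> a ! i"
    proof
      assume "\<exists>i j k. i < j \<and> j < k \<and> k < length a \<and> a ! j < a ! i \<and> a ! j \<le> a ! k \<and> a ! k \<noteq> a ! i"
      then obtain i j k where h: "i < j" "j < k" "k < length a" "a ! j < a ! i" "a ! j \<le> a ! k" "a ! k \<noteq> a ! i"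
        by blast
      consider "a!k = a!j" | "a!j < a!k" "a!i < a!k" | "a!j < a!k" "a!k < a!i" using h by linarith
      then show False using L h by cases blast+
    qed
  next
    assume "\<nexists>i j k. i < j \<and> j < k \<and> k < length a \<and> a ! j < a ! i \<and> a ! j \<le> a ! k \<and> a ! k \<noteq> a ! i"
    then show "(\<nexists>i j k. i < j \<and> j < k \<and> k < length a \<and> a ! j < a ! i \<and> a ! k = a ! j) \<and>
      (\<nexists>i j k. i < j \<and> j < k \<and> k < length a \<and> a ! j < a ! i \<and> a ! i < a ! k) \<and>
      (\<nexists>i j k. i < j \<and> j < k \<and> k < length a \<and> a ! j < a ! k \<and> a ! k < a ! i)"
    proof -
      have nb': "\<And>i j k. i<j \<Longrightarrow> j<k \<Longrightarrow> k<length a \<Longrightarrow> a!j<a!i \<Longrightarrow> a!j \<le> a!k \<Longrightarrow> a!k \<noteq> a!i \<Longrightarrow> False"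
        using \<open>\<nexists>i j k. _\<close> by blast
      show ?thesis
        apply (intro conjI notI; elim exE conjE)
        subgoal for i j k by (rule nb'[of i j k]) auto
        subgoal for i j k by (rule nb'[of i j k]) auto
        subgoal for i j k by (rule nb'[of i j k]) auto
        done
    qed
  qed
qed



lemma sm_in: "a \<noteq> [] \<Longrightarrow> seqmax a \<in> set a"
  unfolding seqmax_def by simp
lemma sm_ge: "x \<in> set a \<Longrightarrow> x \<le> seqmax a"
  unfolding seqmax_def by simp
lemma pm_props: "premax a = Some p \<Longrightarrow> p \<in> set a \<and> p \<noteq> seqmax a \<and> (\<forall>v\<in>set a. v \<noteq> seqmax a \<longrightarrow> v \<le> p)"
proof -
  assume h: "premax a = Some p"
  let ?S = "set a - {seqmax a}"
  have ne: "?S \<noteq> {}" and p: "p = Max ?S" using h unfolding premax_def by (auto split: if_splits)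
  have "p \<in> ?S" using Max_in[OF _ ne] p by simp
  moreover have "\<forall>v\<in>?S. v \<le> p" using p by simp
  ultimately show ?thesis by blast
qed
lemma pm_lt: "premax a = Some p \<Longrightarrow> p < seqmax a"
  using pm_props sm_ge by (metis le_neq_implies_less)
lemma pm_ex: "x \<in> set a \<Longrightarrow> x \<noteq> seqmax a \<Longrightarrow> \<exists>p. premax a = Some p \<and> x \<le> p"
  unfolding premax_def by auto
lemma nt_lt: "x \<in> set a \<Longrightarrow> \<not> in_top_two a x \<Longrightarrow> \<exists>p. premax a = Some p \<and> x < p"
  using pm_ex unfolding in_top_two_def by (metis le_neq_implies_less)

lemma count_two: "count_list xs v \<le> 1 \<Longrightarrow> s < t \<Longrightarrow> t < length xs \<Longrightarrow> xs!s = v \<Longrightarrow> xs!t = v \<Longrightarrow> False"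
proof (induction xs arbitrary: s t)
  case Nil then show ?case by simp
next
  case (Cons x xs)
  show ?case
  proof (cases s)
    case 0
    then have "x = v" using Cons.prems by simp
    then have "count_list xs v = 0" using Cons.prems by simp
    moreover have "v \<in> set xs" using Cons.prems 0 by (cases t) auto
    ultimately show False by (simp add: count_list_0_iff)
  next
    case (Suc s')
    then obtain t' where t: "t = Suc t'" using Cons.prems by (cases t) auto
    show False
      by (rule Cons.IH[of s' t']) (use Cons.prems Suc t in \<open>auto split: if_splits\<close>)
  qed
qed

lemma count_two': "count_list xs v \<ge> 2 \<Longrightarrow> \<exists>s t. s < t \<and> t < length xs \<and> xs!s = v \<and> xs!t = v"
proof (induction xs)
  case Nil then show ?case by simp
next
  case (Cons x xs)
  show ?case
  proof (cases "x = v")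
    case True
    then have "count_list xs v \<noteq> 0" using Cons.prems by simp
    then have "v \<in> set xs" by (simp add: count_list_0_iff)
    then obtain t where "t < length xs" "xs!t = v" by (auto simp: in_set_conv_nth)
    then show ?thesis using True by (intro exI[of _ 0] exI[of _ "Suc t"]) auto
  next
    case False
    then obtain s t where "s < t \<and> t < length xs \<and> xs!s = v \<and> xs!t = v" using Cons by auto
    then show ?thesis by (intro exI[of _ "Suc s"] exI[of _ "Suc t"]) auto
  qed
qed

lemma bwd:
  assumes a: "a = p1 @ q2 @ q3"
    and s1: "sorted p1" and p1M: "\<forall>x\<in>set p1. x < seqmax a"
    and q2ne: "q2 \<noteq> []" and q2t: "\<forall>x\<in>set q2. in_top_two a x"
    and q2c: "\<forall>p. premax a = Some p \<longrightarrow> count_list q2 p \<le> 1"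
    and s3: "sorted_wrt (>) q3" and q3b: "\<forall>x\<in>set q3. below_premax a x"
  shows "\<not> bad3 a"
proof
  assume "bad3 a"
  then obtain i j k where h: "i<j" "j<k" "k<length a" "a!j<a!i" "a!j\<le>a!k" "a!k\<noteq>a!i"
    unfolding bad3_def by blast
  define n1 where "n1 = length p1"
  define n2 where "n2 = length q2"
  define M where "M = seqmax a"
  have la: "length a = n1 + n2 + length q3" using a n1_def n2_def by simp
  have A1: "\<And>t. t<n1 \<Longrightarrow> a!t = p1!t" using a n1_def by (simp add: nth_append)
  have A2: "\<And>t. n1 \<le> t \<Longrightarrow> t < n1+n2 \<Longrightarrow> a!t = q2!(t-n1)" using a n1_def n2_def by (auto simp: nth_append)
  have A3: "\<And>t. n1+n2 \<le> t \<Longrightarrow> a!t = q3!(t-(n1+n2))" using a n1_def n2_def by (auto simp: nth_append)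
  have inA: "\<And>t. t < length a \<Longrightarrow> a!t \<in> set a" by simp
  have leM: "\<And>t. t < length a \<Longrightarrow> a!t \<le> M" unfolding M_def using sm_ge by simp
  have j_q2: "n1 \<le> j \<and> j < n1 + n2"
  proof (rule ccontr)
    assume "\<not> (n1 \<le> j \<and> j < n1 + n2)"
    then consider "j < n1" | "n1 + n2 \<le> j" by linarith
    then show False
    proof cases
      case 1
      then have "p1!i \<le> p1!j" using s1 h n1_def by (intro sorted_nth_mono) auto
      then show False using A1 1 h by simp
    next
      case 2
      have "q3!(j-(n1+n2)) > q3!(k-(n1+n2))" using s3 2 h la
        by (intro sorted_wrt_nth_less[where P="(>)"]) auto
      then show False using A3 2 h by simp
    qed
  qed
  have "j - n1 < length q2" using j_q2 n2_def by auto
  then have "a!j \<in> set q2" using A2[of j] j_q2 by simp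
  then have "in_top_two a (a!j)" using q2t by blast
  moreover have "a!j \<noteq> M" using h leM[of i] by simp
  ultimately have P: "premax a = Some (a!j)" unfolding in_top_two_def M_def by blast
  note Pp = pm_props[OF P]
  have i_q2: "n1 \<le> i"
  proof (rule ccontr)
    assume "\<not> n1 \<le> i"
    then have "i < n1" by simp
    then have "a!i \<in> set p1" using A1[of i] n1_def by simp
    then have "a!i < M" using p1M M_def by blast
    then have "a!i \<le> a!j" using Pp h M_def by simp
    then show False using h by simp
  qed
  have "i - n1 < length q2" "i < n1 + n2" using i_q2 j_q2 h n2_def by auto
  then have "a!i \<in> set q2" using A2[of i] i_q2 by simp
  then have "in_top_two a (a!i)" using q2t by blast
  then have aiM: "a!i = M" using P h unfolding in_top_two_def M_def by auto
  have "a!k \<noteq> M" using aiM h by simp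
  then have "a!k \<le> a!j" using Pp h M_def by simp
  then have akj: "a!k = a!j" using h by simp
  show False
  proof (cases "k < n1 + n2")
    case True
    have "count_list q2 (a!j) \<le> 1" using q2c P by blast
    moreover have "q2!(j-n1) = a!j" "q2!(k-n1) = a!j" using A2 j_q2 True h akj by auto
    moreover have "j - n1 < k - n1" "k - n1 < length q2" using h j_q2 True n2_def by auto
    ultimately show False using count_two[of q2 "a!j" "j-n1" "k-n1"] by simp
  next
    case False
    have "k - (n1+n2) < length q3" using False h la by auto
    then have "a!k \<in> set q3" using A3[of k] False by simp
    then have "below_premax a (a!k)" using q3b by blast
    then show False using P akj unfolding below_premax_def by simp
  qed
qed



lemma fwd:
  assumes ne: "a \<noteq> []" and nb: "\<not> bad3 a"
  shows "\<exists>p1 q2 q3. a = p1 @ q2 @ q3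
       \<and> sorted p1 \<and> (\<forall>x\<in>set p1. x < seqmax a)
       \<and> q2 \<noteq> [] \<and> hd q2 = seqmax a \<and> (\<forall>x\<in>set q2. in_top_two a x)
       \<and> (\<forall>p. premax a = Some p \<longrightarrow> count_list q2 p \<le> 1)
       \<and> sorted_wrt (>) q3 \<and> (\<forall>x\<in>set q3. below_premax a x)"
proof -
  define M where "M = seqmax a"
  have nb': "\<And>i j k. i<j \<Longrightarrow> j<k \<Longrightarrow> k<length a \<Longrightarrow> a!j<a!i \<Longrightarrow> a!j \<le> a!k \<Longrightarrow> a!k \<noteq> a!i \<Longrightarrow> False"
    using nb unfolding bad3_def by blast
  have leM: "\<And>t. t < length a \<Longrightarrow> a!t \<le> M" unfolding M_def using sm_ge by simp
  have "M \<in> set a" using ne sm_in M_def by simp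
  then obtain m0 where m0: "m0 < length a \<and> a!m0 = M" by (auto simp: in_set_conv_nth)
  define m where "m = (LEAST t. t < length a \<and> a!t = M)"
  have m: "m < length a" "a!m = M" using LeastI[of "\<lambda>t. t < length a \<and> a!t = M", OF m0] m_def by auto
  have mfirst: "\<And>t. t < m \<Longrightarrow> a!t \<noteq> M"
    using not_less_Least[of _ "\<lambda>t. t < length a \<and> a!t = M"] m m_def by fastforce
  define r where "r = drop m a"
  define p1 where "p1 = take m a"
  define q2 where "q2 = takeWhile (in_top_two a) r"
  define q3 where "q3 = dropWhile (in_top_two a) r"
  have rq: "r = q2 @ q3" unfolding q2_def q3_def by simp
  have aeq: "a = p1 @ q2 @ q3" unfolding p1_def r_def rq[symmetric] by simp
  have lp1: "length p1 = m" using m p1_def by simp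
  have rC: "r = M # drop (Suc m) a" unfolding r_def using m Cons_nth_drop_Suc[of m a] by simp
  have topM: "in_top_two a M" unfolding in_top_two_def M_def by simp
  have q2C: "q2 = M # takeWhile (in_top_two a) (drop (Suc m) a)" unfolding q2_def rC using topM by simp
  have q2ne: "q2 \<noteq> []" and hq2: "hd q2 = M" using q2C by auto
  have s1: "sorted p1" unfolding sorted_iff_nth_mono_less
  proof (intro allI impI)
    fix i j assume ij: "i < j" "j < length p1"
    show "p1!i \<le> p1!j"
    proof (rule ccontr)
      assume "\<not> p1!i \<le> p1!j"
      then have "a!j < a!i" using ij lp1 p1_def by simp
      moreover have "a!j \<le> a!m" using m leM ij lp1 by simp
      moreover have "a!m \<noteq> a!i" using mfirst[of i] ij lp1 m by simp
      ultimately show False using nb'[of i j m] ij lp1 m by simp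
    qed
  qed
  have p1M: "\<forall>x\<in>set p1. x < M"
  proof
    fix x assume "x \<in> set p1"
    then obtain t where t: "t < m" "x = a!t" using lp1 p1_def by (auto simp: in_set_conv_nth)
    then show "x < M" using mfirst[of t] leM[of t] m by simp
  qed
  have q2t: "\<forall>x\<in>set q2. in_top_two a x" unfolding q2_def by (auto dest: set_takeWhileD)
  have q2c: "\<forall>p. premax a = Some p \<longrightarrow> count_list q2 p \<le> 1"
  proof (intro allI impI)
    fix p assume P: "premax a = Some p"
    have pM: "p < M" using pm_lt[OF P] M_def by simp
    have "count_list r p \<le> 1"
    proof (rule ccontr)
      assume "\<not> count_list r p \<le> 1"
      then obtain s t where st: "s < t" "t < length r" "r!s = p" "r!t = p" using count_two'[of r p] by auto
      have "r!0 = M" using rC by simp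
      then have "s \<noteq> 0" using st pM by (metis less_irrefl)
      have "a!(m+s) = p" "a!(m+t) = p" using st r_def m by auto
      moreover have "m + t < length a" using st r_def by simp
      ultimately show False using nb'[of m "m+s" "m+t"] \<open>s \<noteq> 0\<close> st m pM by simp
    qed
    then show "count_list q2 p \<le> 1" using rq by simp
  qed
  have C: "\<And>j k. m < j \<Longrightarrow> j < k \<Longrightarrow> k < length a \<Longrightarrow> \<not> in_top_two a (a!j) \<Longrightarrow> a!k < a!j"
  proof -
    fix j k assume jk: "m < j" "j < k" "k < length a" "\<not> in_top_two a (a!j)"
    obtain p where P: "premax a = Some p" "a!j < p" using nt_lt[of "a!j" a] jk by auto
    have pM: "p < M" using pm_lt[OF P(1)] M_def by simp
    have "p \<in> set a" using pm_props[OF P(1)] by simp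
    then obtain q where q: "q < length a" "a!q = p" by (auto simp: in_set_conv_nth)
    show "a!k < a!j"
    proof (rule ccontr)
      assume "\<not> a!k < a!j"
      then have jk2: "a!j \<le> a!k" by simp
      show False
      proof (cases "a!k = M")
        case False
        have "a!j < M" using P pM by simp
        then show False using nb'[of m j k] jk jk2 m False by simp
      next
        case True
        consider "q < j" | "q = j" | "j < q" by linarith
        then show False
        proof cases
          case 1 then show False using nb'[of q j k] jk jk2 q P True pM by simp
        next
          case 2 then show False using q P by simp
        next
          case 3 then show False using nb'[of m j q] jk q P m pM by simp
        qed
      qed
    qed
  qed
  define j0 where "j0 = m + length q2"
  have q3d: "q3 = drop j0 a" unfolding j0_def
  proof -
    have "drop (length q2) r = q3" using rq by simp
    then show "q3 = drop (m + length q2) a" unfolding r_def by (simp add: add.commute)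
  qed
  have mj0: "m < j0" using q2ne j0_def by simp
  have D0: "j0 < length a \<Longrightarrow> \<not> in_top_two a (a!j0)"
  proof -
    assume j0: "j0 < length a"
    then have "q3 \<noteq> []" using q3d by simp
    then have "\<not> in_top_two a (hd q3)" unfolding q3_def by (rule hd_dropWhile)
    then show ?thesis using q3d j0 by (simp add: hd_drop_conv_nth)
  qed
  have D: "\<And>t. j0 \<le> t \<Longrightarrow> t < length a \<Longrightarrow> \<not> in_top_two a (a!t)"
  proof -
    fix t assume t: "j0 \<le> t" "t < length a"
    show "\<not> in_top_two a (a!t)"
    proof (cases "t = j0")
      case True then show ?thesis using D0 t by simp
    next
      case False
      then have lt: "a!t < a!j0" using C[of j0 t] mj0 t D0 by simp
      obtain p where P: "premax a = Some p" "a!j0 < p" using nt_lt[of "a!j0" a] D0 t by auto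
      have pM: "p < M" using pm_lt[OF P(1)] M_def by simp
      show ?thesis using lt P pM unfolding in_top_two_def M_def by auto
    qed
  qed
  have s3: "sorted_wrt (>) q3" unfolding sorted_wrt_iff_nth_less
  proof (intro allI impI)
    fix i j assume ij: "i < j" "j < length q3"
    have "a!(j0+j) < a!(j0+i)" using C[of "j0+i" "j0+j"] D[of "j0+i"] ij q3d mj0 by simp
    then show "q3!i > q3!j" using q3d ij by simp
  qed
  have q3b: "\<forall>x\<in>set q3. below_premax a x"
  proof
    fix x assume "x \<in> set q3"
    then obtain t where t: "t < length q3" "x = q3!t" by (auto simp: in_set_conv_nth)
    then have "x = a!(j0+t)" "j0 + t < length a" using q3d by auto
    then have "\<not> in_top_two a x" using D[of "j0+t"] by simp
    then obtain p where "premax a = Some p" "x < p" using nt_lt[of x a] \<open>x = a!(j0+t)\<close> \<open>j0 + t < length a\<close> by auto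
    then show "below_premax a x" unfolding below_premax_def by simp
  qed
  show ?thesis
    using aeq s1 p1M q2ne hq2 q2t q2c s3 q3b unfolding M_def by blast
qed

theorem mainTheorem1:
  fixes a :: "nat list"
  assumes "length a \<ge> 1" and "inversion_seq a"
  shows "(avoids a [1,0,0] \<and> avoids a [1,0,2] \<and> avoids a [2,0,1]) \<longleftrightarrow>
    (\<exists>p1 q2 q3. a = p1 @ q2 @ q3
       \<and> sorted p1 \<and> (\<forall>x\<in>set p1. x < seqmax a)
       \<and> q2 \<noteq> [] \<and> hd q2 = seqmax a \<and> (\<forall>x\<in>set q2. in_top_two a x)
       \<and> (\<forall>p. premax a = Some p \<longrightarrow> count_list q2 p \<le> 1)
       \<and> sorted_wrt (>) q3 \<and> (\<forall>x\<in>set q3. below_premax a x))"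
  unfolding avoid_iff
proof
  assume "\<not> bad3 a"
  then show "\<exists>p1 q2 q3. a = p1 @ q2 @ q3
       \<and> sorted p1 \<and> (\<forall>x\<in>set p1. x < seqmax a)
       \<and> q2 \<noteq> [] \<and> hd q2 = seqmax a \<and> (\<forall>x\<in>set q2. in_top_two a x)
       \<and> (\<forall>p. premax a = Some p \<longrightarrow> count_list q2 p \<le> 1)
       \<and> sorted_wrt (>) q3 \<and> (\<forall>x\<in>set q3. below_premax a x)"
    using fwd assms(1) by (cases a) auto
next
  assume "\<exists>p1 q2 q3. a = p1 @ q2 @ q3
       \<and> sorted p1 \<and> (\<forall>x\<in>set p1. x < seqmax a)
       \<and> q2 \<noteq> [] \<and> hd q2 = seqmax a \<and> (\<forall>x\<in>set q2. in_top_two a x)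
       \<and> (\<forall>p. premax a = Some p \<longrightarrow> count_list q2 p \<le> 1)
       \<and> sorted_wrt (>) q3 \<and> (\<forall>x\<in>set q3. below_premax a x)"
  then obtain p1 q2 q3 where "a = p1 @ q2 @ q3"
       "sorted p1" "\<forall>x\<in>set p1. x < seqmax a"
       "q2 \<noteq> []" "\<forall>x\<in>set q2. in_top_two a x"
       "\<forall>p. premax a = Some p \<longrightarrow> count_list q2 p \<le> 1"
       "sorted_wrt (>) q3" "\<forall>x\<in>set q3. below_premax a x" by blast
  then show "\<not> bad3 a" by (rule bwd)
qed

end
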